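(* Let $N$ be a society, $\nabla$ an ES basic fusion operator with representing basic assignment $\Phi\mapsto\succeq_\Phi$, and $D$ an $N$-coalition. The following are equivalent: (i) $D$ is a decisive $N$-coalition with respect to $\nabla$; (ii) for every $N$-profile $\Phi$ and all $E,E'\in\mathcal E$ with $|[\![B(E)]\!]|\le2$, if $B(\nabla(E_i,E))\wedge B(E')\vdash\bot$ for all $i\in D$ then $B(\nabla(\Phi,E))\wedge B(E')\vdash\bot$; (iii) for every $N$-profile $\Phi$ and all interpretations $w,w'$, if $w\succ_{E_i}w'$ for all $i\in D$ then $w\succ_\Phi w'$.
   Context: Setting: epistemic space $(\mathcal E,B,\mathcal L_{\mathcal P})$ ($\mathcal E$ nonempty, $B:\mathcal E\to$ propositional formulas over finite $\mathcal P$, image modulo equivalence exactly the consistent formulas; $\mathcal W_{\mathcal P}$ valuations, $[\![\phi]\!]$ models); agents: well-ordered set $\mathcal S$; society: nonempty finite $N\subseteq\mathcal S$; $N$-profile $\Phi:N\to\mathcal E$, $E_i=\Phi(i)$, identified with $E_i$ if $N=\{i\}$; profiles on $\{i_1<\dots<i_n\}$, $\{j_1<\dots<j_m\}$ equivalent if $n=m$ and entries coincide position-wise. ES basic fusion operator: a map $\nabla(\Phi,E)\in\mathcal E$ with (ESF1) $B(\nabla(\Phi,E))\vdash B(E)$; (ESF2) equivalent profiles and $B(E)\equiv B(E')$ give equivalent $B(\nabla)$; (ESF3) if $B(E)\equiv B(E')\wedge B(E'')$ then $B(\nabla(\Phi,E'))\wedge B(E'')\vdash B(\nabla(\Phi,E))$;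 (ESF4) if moreover $B(\nabla(\Phi,E'))\wedge B(E'')\nvdash\bot$ then $B(\nabla(\Phi,E))\vdash B(\nabla(\Phi,E'))\wedge B(E'')$. Representing basic assignment: the unique $\Phi\mapsto\succeq_\Phi$ (total preorders on $\mathcal W_{\mathcal P}$, $\succ$ strict part, equal on equivalent profiles) with $[\![B(\nabla(\Phi,E))]\!]=\max([\![B(E)]\!],\succeq_\Phi)$. An $N$-coalition is a subset $D\subseteq N$; $D$ is decisive for $E$ against $E'$ if for every $N$-profile $\Phi$ with $B(\nabla(E_i,E))\wedge B(E')\vdash\bot$ for all $i\in D$ and $\bigwedge_{i\in D}B(\nabla(E_i,E))\nvdash\bot$ (empty conjunction is $\top$), we have $B(\nabla(\Phi,E))\wedge B(E')\vdash\bot$; $D$ is a decisive $N$-coalition if this holds for all $E,E'$. *)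

theory Defs
  imports Main
begin

datatype 'p form = Atom 'p | FBot | FTop | FNeg "'p form"
  | FAnd "'p form" "'p form" | FOr "'p form" "'p form" | FImp "'p form" "'p form"

type_synonym 'p world = "'p set"

fun holds :: "'p world \<Rightarrow> 'p form \<Rightarrow> bool" where
  "holds w (Atom p) = (p \<in> w)"
| "holds w FBot = False"
| "holds w FTop = True"
| "holds w (FNeg f) = (\<not> holds w f)"
| "holds w (FAnd f g) = (holds w f \<and> holds w g)"
| "holds w (FOr f g) = (holds w f \<or> holds w g)"
| "holds w (FImp f g) = (holds w f \<longrightarrow> holds w g)"

definition models :: "'p form \<Rightarrow> 'p world set" where
  "models f = {w. holds w f}"

definition entails :: "'p form \<Rightarrow> 'p form \<Rightarrow> bool" where
  "entails f g \<longleftrightarrow> models f \<subseteq> models g"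

definition fequiv :: "'p form \<Rightarrow> 'p form \<Rightarrow> bool" where
  "fequiv f g \<longleftrightarrow> entails f g \<and> entails g f"

definition inconsistent :: "'p form \<Rightarrow> bool" where
  "inconsistent f \<longleftrightarrow> entails f FBot"

definition epistemic_space :: "('e \<Rightarrow> 'p form) \<Rightarrow> bool" where
  "epistemic_space B \<longleftrightarrow>
     (\<forall>e. \<not> inconsistent (B e)) \<and>
     (\<forall>f. \<not> inconsistent f \<longrightarrow> (\<exists>e. fequiv (B e) f))"

text \<open>Agents form a well-ordered type 's. A society is a finite nonempty set of
agents; an N-profile is a function 's => 'e of which only the values on N matter.\<close>
definition society :: "'s set \<Rightarrow> bool" where
  "society N \<longleftrightarrow> finite N \<and> N \<noteq> {}"

definition profile_equiv :: "'s::wellorder set \<Rightarrow> ('s \<Rightarrow> 'e) \<Rightarrow> 's set \<Rightarrow> ('s \<Rightarrow> 'e) \<Rightarrow> bool" where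
  "profile_equiv N \<Phi> M \<Psi> \<longleftrightarrow>
     map \<Phi> (sorted_list_of_set N) = map \<Psi> (sorted_list_of_set M)"

text \<open>A fusion operator: nabla N Phi E is the result of fusing the N-profile Phi
under integrity constraint E. The singleton profile E_i is nabla {i} Phi.\<close>
definition ES_basic_fusion ::
  "('e \<Rightarrow> 'p form) \<Rightarrow> ('s::wellorder set \<Rightarrow> ('s \<Rightarrow> 'e) \<Rightarrow> 'e \<Rightarrow> 'e) \<Rightarrow> bool" where
  "ES_basic_fusion B nabla \<longleftrightarrow>
     (\<forall>N \<Phi> E. society N \<longrightarrow> entails (B (nabla N \<Phi> E)) (B E)) \<and>
     (\<forall>N \<Phi> M \<Psi> E E'. society N \<longrightarrow> society M \<longrightarrow> profile_equiv N \<Phi> M \<Psi> \<longrightarrow>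
        fequiv (B E) (B E') \<longrightarrow> fequiv (B (nabla N \<Phi> E)) (B (nabla M \<Psi> E'))) \<and>
     (\<forall>N \<Phi> E E' E''. society N \<longrightarrow> fequiv (B E) (FAnd (B E') (B E'')) \<longrightarrow>
        entails (FAnd (B (nabla N \<Phi> E')) (B E'')) (B (nabla N \<Phi> E))) \<and>
     (\<forall>N \<Phi> E E' E''. society N \<longrightarrow> fequiv (B E) (FAnd (B E') (B E'')) \<longrightarrow>
        \<not> inconsistent (FAnd (B (nabla N \<Phi> E')) (B E'')) \<longrightarrow>
        entails (B (nabla N \<Phi> E)) (FAnd (B (nabla N \<Phi> E')) (B E'')))"

definition total_preorder_on_worlds :: "('p world \<Rightarrow> 'p world \<Rightarrow> bool) \<Rightarrow> bool" where
  "total_preorder_on_worlds r \<longleftrightarrow>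
     (\<forall>w. r w w) \<and> (\<forall>u v w. r u v \<longrightarrow> r v w \<longrightarrow> r u w) \<and> (\<forall>u v. r u v \<or> r v u)"

definition strict :: "('a \<Rightarrow> 'a \<Rightarrow> bool) \<Rightarrow> 'a \<Rightarrow> 'a \<Rightarrow> bool" where
  "strict r w w' \<longleftrightarrow> r w w' \<and> \<not> r w' w"

definition maxset :: "'a set \<Rightarrow> ('a \<Rightarrow> 'a \<Rightarrow> bool) \<Rightarrow> 'a set" where
  "maxset S r = {w \<in> S. \<forall>w' \<in> S. r w w'}"

text \<open>rep N Phi is the total preorder assigned to the N-profile Phi (w >= w').\<close>
definition representing_basic_assignment ::
  "('e \<Rightarrow> 'p form) \<Rightarrow> ('s::wellorder set \<Rightarrow> ('s \<Rightarrow> 'e) \<Rightarrow> 'e \<Rightarrow> 'e)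
   \<Rightarrow> ('s set \<Rightarrow> ('s \<Rightarrow> 'e) \<Rightarrow> 'p world \<Rightarrow> 'p world \<Rightarrow> bool) \<Rightarrow> bool" where
  "representing_basic_assignment B nabla rep \<longleftrightarrow>
     (\<forall>N \<Phi>. society N \<longrightarrow> total_preorder_on_worlds (rep N \<Phi>)) \<and>
     (\<forall>N \<Phi> M \<Psi>. society N \<longrightarrow> society M \<longrightarrow> profile_equiv N \<Phi> M \<Psi> \<longrightarrow>
        rep N \<Phi> = rep M \<Psi>) \<and>
     (\<forall>N \<Phi> E. society N \<longrightarrow>
        models (B (nabla N \<Phi> E)) = maxset (models (B E)) (rep N \<Phi>))"

definition decisive_for ::
  "('e \<Rightarrow> 'p form) \<Rightarrow> ('s::wellorder set \<Rightarrow> ('s \<Rightarrow> 'e) \<Rightarrow> 'e \<Rightarrow> 'e)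
   \<Rightarrow> 's set \<Rightarrow> 's set \<Rightarrow> 'e \<Rightarrow> 'e \<Rightarrow> bool" where
  "decisive_for B nabla N D E E' \<longleftrightarrow>
     (\<forall>\<Phi>. (\<forall>i\<in>D. inconsistent (FAnd (B (nabla {i} \<Phi> E)) (B E'))) \<longrightarrow>
          (\<Inter>i\<in>D. models (B (nabla {i} \<Phi> E))) \<noteq> {} \<longrightarrow>
          inconsistent (FAnd (B (nabla N \<Phi> E)) (B E')))"

definition decisive_coalition ::
  "('e \<Rightarrow> 'p form) \<Rightarrow> ('s::wellorder set \<Rightarrow> ('s \<Rightarrow> 'e) \<Rightarrow> 'e \<Rightarrow> 'e)
   \<Rightarrow> 's set \<Rightarrow> 's set \<Rightarrow> bool" where
  "decisive_coalition B nabla N D \<longleftrightarrow> (\<forall>E E'. decisive_for B nabla N D E E')"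

end

theory Submission
  imports Defs
begin

fun chr :: "'p list \<Rightarrow> 'p world \<Rightarrow> 'p form" where
  "chr [] w = FTop"
| "chr (p # xs) w = FAnd (if p \<in> w then Atom p else FNeg (Atom p)) (chr xs w)"

lemma holds_chr: "holds v (chr xs w) \<longleftrightarrow> (\<forall>p\<in>set xs. p \<in> v \<longleftrightarrow> p \<in> w)"
  by (induction xs) auto

lemma models_chr:
  assumes "set xs = (UNIV :: ('p::finite) set)"
  shows "models (chr xs w) = {w}"
  using assms by (auto simp: models_def holds_chr)

lemma inc_iff: "inconsistent (FAnd f g) \<longleftrightarrow> models f \<inter> models g = {}"
  by (auto simp: inconsistent_def entails_def models_def)

lemma exists_state:
  assumes "epistemic_space B" and "models f \<noteq> {}"
  shows "\<exists>e. models (B e) = models f"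
proof -
  have "\<not> inconsistent f" using assms(2)
    by (auto simp: inconsistent_def entails_def models_def)
  then obtain e where "fequiv (B e) f" using assms(1) by (auto simp: epistemic_space_def)
  then show ?thesis by (auto simp: fequiv_def entails_def)
qed

lemma ex_states:
  fixes B :: "'e \<Rightarrow> ('p::finite) form"
  assumes "epistemic_space B"
  shows "\<exists>e. models (B e) = {w}" "\<exists>e. models (B e) = {w, w'}"
proof -
  obtain xs where xs: "set xs = (UNIV :: 'p set)" using finite_list[OF finite_UNIV] by blast
  show "\<exists>e. models (B e) = {w}"
    using exists_state[OF assms, of "chr xs w"] models_chr[OF xs] by auto
  have "models (FOr (chr xs w) (chr xs w')) = {w, w'}"
    using models_chr[OF xs] by (auto simp: models_def)
  then show "\<exists>e. models (B e) = {w, w'}"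
    using exists_state[OF assms, of "FOr (chr xs w) (chr xs w')"] by auto
qed

lemma society_single: "society {i}" by (simp add: society_def)

theorem mainTheorem15:
  fixes B :: "'e \<Rightarrow> ('p::finite) form"
    and nabla :: "'s::wellorder set \<Rightarrow> ('s \<Rightarrow> 'e) \<Rightarrow> 'e \<Rightarrow> 'e"
    and rep :: "'s set \<Rightarrow> ('s \<Rightarrow> 'e) \<Rightarrow> 'p world \<Rightarrow> 'p world \<Rightarrow> bool"
    and N D :: "'s set"
  assumes "epistemic_space B"
    and "society N"
    and "ES_basic_fusion B nabla"
    and "representing_basic_assignment B nabla rep"
    and "D \<subseteq> N"
  shows "(decisive_coalition B nabla N D
          \<longleftrightarrow> (\<forall>\<Phi> E E'. card (models (B E)) \<le> 2 \<longrightarrow>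
                 (\<forall>i\<in>D. inconsistent (FAnd (B (nabla {i} \<Phi> E)) (B E'))) \<longrightarrow>
                 inconsistent (FAnd (B (nabla N \<Phi> E)) (B E'))))
       \<and> (decisive_coalition B nabla N D
          \<longleftrightarrow> (\<forall>\<Phi> w w'. (\<forall>i\<in>D. strict (rep {i} \<Phi>) w w') \<longrightarrow> strict (rep N \<Phi>) w w'))"
proof -
  have tp: "\<And>M \<Phi>. society M \<Longrightarrow> total_preorder_on_worlds (rep M \<Phi>)"
    and mx: "\<And>M \<Phi> E. society M \<Longrightarrow> models (B (nabla M \<Phi> E)) = maxset (models (B E)) (rep M \<Phi>)"
    using assms(4) unfolding representing_basic_assignment_def by blast+
  have mxN: "\<And>\<Phi> E. models (B (nabla N \<Phi> E)) = maxset (models (B E)) (rep N \<Phi>)"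
    by (rule mx[OF assms(2)])
  have mxi: "\<And>i \<Phi> E. models (B (nabla {i} \<Phi> E)) = maxset (models (B E)) (rep {i} \<Phi>)"
    by (rule mx[OF society_single])
  have tpN: "\<And>\<Phi>. total_preorder_on_worlds (rep N \<Phi>)" by (rule tp[OF assms(2)])
  have tpi: "\<And>i \<Phi>. total_preorder_on_worlds (rep {i} \<Phi>)" by (rule tp[OF society_single])
  let ?iii = "\<forall>\<Phi> w w'. (\<forall>i\<in>D. strict (rep {i} \<Phi>) w w') \<longrightarrow> strict (rep N \<Phi>) w w'"
  let ?ii = "\<forall>\<Phi> E E'. card (models (B E)) \<le> 2 \<longrightarrow>
                 (\<forall>i\<in>D. inconsistent (FAnd (B (nabla {i} \<Phi> E)) (B E'))) \<longrightarrow>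
                 inconsistent (FAnd (B (nabla N \<Phi> E)) (B E'))"
  have key: "strict (rep N \<Phi>) w w'"
    if "models (B E) = {w, w'}" "models (B E') = {w'}"
       "models (B (nabla N \<Phi> E)) \<inter> models (B E') = {}" for \<Phi> w w' E E'
  proof -
    have "maxset {w, w'} (rep N \<Phi>) \<inter> {w'} = {}" using that(3) by (simp only: mxN that(1,2))
    then have "w' \<notin> maxset {w, w'} (rep N \<Phi>)" by blast
    moreover have "rep N \<Phi> w' w'" using tpN[of \<Phi>] unfolding total_preorder_on_worlds_def by simp
    ultimately have "\<not> rep N \<Phi> w' w" unfolding maxset_def by auto
    moreover have "rep N \<Phi> w w' \<or> rep N \<Phi> w' w" using tpN[of \<Phi>] unfolding total_preorder_on_worlds_def by simp
    ultimately show ?thesis unfolding strict_def by blast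
  qed
  have maxi_single: "maxset {w, w'} (rep {i} \<Phi>) = {w}" if "strict (rep {i} \<Phi>) w w'" for i \<Phi> w w'
  proof -
    have r: "rep {i} \<Phi> w w" "rep {i} \<Phi> w w'" "\<not> rep {i} \<Phi> w' w"
      using that tpi[of i \<Phi>] unfolding strict_def total_preorder_on_worlds_def by simp_all
    then have "w \<noteq> w'" by auto
    then show ?thesis using r unfolding maxset_def by auto
  qed
  have i_iii: "decisive_coalition B nabla N D \<Longrightarrow> ?iii"
  proof (intro allI impI)
    fix \<Phi> w w'
    assume dec: "decisive_coalition B nabla N D" and h: "\<forall>i\<in>D. strict (rep {i} \<Phi>) w w'"
    obtain E where E: "models (B E) = {w, w'}" using ex_states(2)[OF assms(1)] by blast
    obtain E' where E': "models (B E') = {w'}" using ex_states(1)[OF assms(1)] by blast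
    have m: "\<forall>i\<in>D. models (B (nabla {i} \<Phi> E)) = {w}" using h maxi_single by (simp only: mxi E) blast
    have "\<forall>i\<in>D. inconsistent (FAnd (B (nabla {i} \<Phi> E)) (B E'))"
      using m E' h by (auto simp: inc_iff strict_def)
    moreover have "(\<Inter>i\<in>D. models (B (nabla {i} \<Phi> E))) \<noteq> {}" using m by auto
    ultimately have "inconsistent (FAnd (B (nabla N \<Phi> E)) (B E'))"
      using dec by (auto simp: decisive_coalition_def decisive_for_def)
    then show "strict (rep N \<Phi>) w w'" using key[OF E E'] by (simp add: inc_iff)
  qed
  have ii_iii: "?ii \<Longrightarrow> ?iii"
  proof (intro allI impI)
    fix \<Phi> w w'
    assume dec: ?ii and h: "\<forall>i\<in>D. strict (rep {i} \<Phi>) w w'"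
    obtain E where E: "models (B E) = {w, w'}" using ex_states(2)[OF assms(1)] by blast
    obtain E' where E': "models (B E') = {w'}" using ex_states(1)[OF assms(1)] by blast
    have m: "\<forall>i\<in>D. models (B (nabla {i} \<Phi> E)) = {w}" using h maxi_single by (simp only: mxi E) blast
    have "\<forall>i\<in>D. inconsistent (FAnd (B (nabla {i} \<Phi> E)) (B E'))"
      using m E' h by (auto simp: inc_iff strict_def)
    moreover have "card (models (B E)) \<le> 2" using E by (simp add: card_insert_le_m1)
    ultimately have "inconsistent (FAnd (B (nabla N \<Phi> E)) (B E'))"
      using dec by blast
    then show "strict (rep N \<Phi>) w w'" using key[OF E E'] by (simp add: inc_iff)
  qed
  have iii_i: "?iii \<Longrightarrow> decisive_coalition B nabla N D"
    unfolding decisive_coalition_def decisive_for_def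
  proof (intro allI impI)
    fix E E' \<Phi>
    assume iii: ?iii
      and h1: "\<forall>i\<in>D. inconsistent (FAnd (B (nabla {i} \<Phi> E)) (B E'))"
      and h2: "(\<Inter>i\<in>D. models (B (nabla {i} \<Phi> E))) \<noteq> {}"
    show "inconsistent (FAnd (B (nabla N \<Phi> E)) (B E'))"
    proof (cases "D = {}")
      case True
      then have "strict (rep N \<Phi>) w w" for w using iii by blast
      then show ?thesis by (simp add: strict_def)
    next
      case False
      obtain w where w: "\<forall>i\<in>D. w \<in> maxset (models (B E)) (rep {i} \<Phi>)" using h2 mxi by auto
      have wE: "w \<in> models (B E)" using w False unfolding maxset_def by auto
      show ?thesis unfolding inc_iff
      proof (rule ccontr)
        assume "models (B (nabla N \<Phi> E)) \<inter> models (B E') \<noteq> {}"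
        then obtain w' where w'1: "w' \<in> maxset (models (B E)) (rep N \<Phi>)" and w'2: "w' \<in> models (B E')"
          using mxN by auto
        have w'E: "w' \<in> models (B E)" using w'1 unfolding maxset_def by auto
        have "strict (rep {i} \<Phi>) w w'" if i: "i \<in> D" for i
        proof -
          have nm: "w' \<notin> maxset (models (B E)) (rep {i} \<Phi>)"
            using h1 i w'2 mxi[of i \<Phi> E] by (auto simp: inc_iff)
          then obtain y where y: "y \<in> models (B E)" "\<not> rep {i} \<Phi> w' y" using w'E unfolding maxset_def by auto
          have wy: "rep {i} \<Phi> w y" "rep {i} \<Phi> w w'" using w i y(1) w'E unfolding maxset_def by auto
          have "\<not> rep {i} \<Phi> w' w" using y wy tpi[of i \<Phi>] unfolding total_preorder_on_worlds_def by blast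
          then show ?thesis using wy by (simp add: strict_def)
        qed
        then have "strict (rep N \<Phi>) w w'" using iii by blast
        moreover have "rep N \<Phi> w' w" using w'1 wE unfolding maxset_def by auto
        ultimately show False by (simp add: strict_def)
      qed
    qed
  qed
  have iii_ii: "?iii \<Longrightarrow> ?ii"
  proof (intro allI impI)
    fix \<Phi> E E'
    assume iii: ?iii and c: "card (models (B E)) \<le> 2"
      and h1: "\<forall>i\<in>D. inconsistent (FAnd (B (nabla {i} \<Phi> E)) (B E'))"
    show "inconsistent (FAnd (B (nabla N \<Phi> E)) (B E'))"
    proof (cases "D = {}")
      case True
      then have "strict (rep N \<Phi>) w w" for w using iii by blast
      then show ?thesis by (simp add: strict_def)
    next
      case False
      then obtain i0 where i0: "i0 \<in> D" by blast
      show ?thesis unfolding inc_iff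
      proof (rule ccontr)
        assume "models (B (nabla N \<Phi> E)) \<inter> models (B E') \<noteq> {}"
        then obtain w' where w'1: "w' \<in> maxset (models (B E)) (rep N \<Phi>)" and w'2: "w' \<in> models (B E')"
          using mxN by auto
        have w'E: "w' \<in> models (B E)" using w'1 unfolding maxset_def by auto
        have nm: "\<And>i. i \<in> D \<Longrightarrow> w' \<notin> maxset (models (B E)) (rep {i} \<Phi>)"
          using h1 w'2 mxi by (auto simp: inc_iff)
        obtain y where y: "y \<in> models (B E)" "\<not> rep {i0} \<Phi> w' y"
          using nm[OF i0] w'E unfolding maxset_def by auto
        have yne: "y \<noteq> w'" using y tpi[of i0 \<Phi>] unfolding total_preorder_on_worlds_def by blast
        have fin: "finite (models (B E))"
          by (rule finite_subset[of _ UNIV]) simp_all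
        have ME: "models (B E) = {y, w'}"
        proof -
          have "{y, w'} \<subseteq> models (B E)" using y w'E by auto
          moreover have "card {y, w'} = 2" using yne by simp
          ultimately show ?thesis using c fin by (metis card_seteq)
        qed
        have "strict (rep {i} \<Phi>) y w'" if i: "i \<in> D" for i
        proof -
          have "\<not> rep {i} \<Phi> w' y" using nm[OF i] ME tpi[of i \<Phi>]
            unfolding maxset_def total_preorder_on_worlds_def by auto
          then show ?thesis using tpi[of i \<Phi>] unfolding strict_def total_preorder_on_worlds_def by blast
        qed
        then have "strict (rep N \<Phi>) y w'" using iii by blast
        moreover have "rep N \<Phi> w' y" using w'1 y unfolding maxset_def by auto
        ultimately show False by (simp add: strict_def)
      qed
    qed
  qed
  show ?thesis
  proof (intro conjI iffI)
    show "decisive_coalition B nabla N D" if ?ii using iii_i[OF ii_iii[OF that]] .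
    show ?ii if "decisive_coalition B nabla N D" using iii_ii[OF i_iii[OF that]] .
    show "decisive_coalition B nabla N D" if ?iii using iii_i[OF that] .
    show ?iii if "decisive_coalition B nabla N D" using i_iii[OF that] .
  qed
qed

end
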